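(* Let $\Sigma=(X,U,F)$ be a system and $Q\subset X$ a controlled invariant set. If $K\subset Q$ (nonempty) and $m\in\mathbb{N}$, then \[h_{inv}(K,Q)=\limsup_{n\to\infty}\frac{1}{nm}\log r_{inv}(nm,K,Q).\]
   Context: A system is a triple $\Sigma=(X,U,F)$ where $X,U$ are nonempty sets and $F:X\times U\rightrightarrows X$ is a set-valued map with $F(x,u)\neq\emptyset$ for all $(x,u)$. For $A\subset X$ and $u\in U$, $F(A,u)=\bigcup_{x\in A}F(x,u)$. A set $Q\subset X$ is controlled invariant if for every $x\in Q$ there is $u\in U$ with $F(x,u)\subset Q$. For $u\in U$ put $Q_u=\{x\in Q: F(x,u)\subset Q\}$. Elements of $U^n$ are written $\omega=\omega_0\omega_1\cdots\omega_{n-1}$, and $\omega_{[0,i]}=\omega_0\cdots\omega_i$. A set $S\subset U^n$ is an admissible family of length $n$ for $Q$ if (a) $\omega'_0=\omega''_0$ for all $\omega',\omega''\in S$, and (b) there exists $x\in Q$ such that for every $\omega\in S$, with $I^0_\omega(x)=\{x\}$: for all $i=0,1,\dots,n-2$, $F(I^i_\omega(x),\omega_i)\subset\bigcup_{\omega'\in S,\ \omega'_{[0,i]}=\omega_{[0,i]}}Q_{\omega'_{i+1}}$ and $I^{i+1}_\omega(x):=F(I^i_\omega(x),\omega_i)\cap Q_{\omega_{i+1}}\neq\emptyset$; and $I^n_\omega(x):=F(I^{n-1}_\omega(x),\omega_{n-1})\subset Q$. Let $AF^n(Q)$ be the set of admissible families of length $n$ for $Q$, and for $S\in AF^n(Q)$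 let $Q_S$ be the set of all $x\in Q$ satisfying (b). For nonempty $K\subset Q$, a set $\mathscr{S}\subset U^n$ is $(n,K,Q)$-spanning if $K\subset\bigcup_{S\subset\mathscr{S},\,S\in AF^n(Q)}Q_S$. Let $r_{inv}(n,K,Q)=\inf\{\sharp\mathscr{S}:\mathscr{S}\text{ is }(n,K,Q)\text{-spanning}\}$ (with $\inf\emptyset=\infty$), and the invariance entropy $h_{inv}(K,Q)=\limsup_{n\to\infty}\frac1n\log r_{inv}(n,K,Q)$, where $\log$ is base $2$. *)

theory Defs
  imports Complex_Main "HOL-Library.Extended_Real" "HOL-Library.Liminf_Limsup"
begin

definition is_system :: "'x set \<Rightarrow> 'u set \<Rightarrow> ('x \<Rightarrow> 'u \<Rightarrow> 'x set) \<Rightarrow> bool" where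
  "is_system X U F \<longleftrightarrow> X \<noteq> {} \<and> U \<noteq> {} \<and>
     (\<forall>x\<in>X. \<forall>u\<in>U. F x u \<noteq> {} \<and> F x u \<subseteq> X)"

definition controlled_invariant :: "'u set \<Rightarrow> ('x \<Rightarrow> 'u \<Rightarrow> 'x set) \<Rightarrow> 'x set \<Rightarrow> bool" where
  "controlled_invariant U F Q \<longleftrightarrow> (\<forall>x\<in>Q. \<exists>u\<in>U. F x u \<subseteq> Q)"

definition Fimg :: "('x \<Rightarrow> 'u \<Rightarrow> 'x set) \<Rightarrow> 'x set \<Rightarrow> 'u \<Rightarrow> 'x set" where
  "Fimg F A u = (\<Union>x\<in>A. F x u)"

definition Qu :: "('x \<Rightarrow> 'u \<Rightarrow> 'x set) \<Rightarrow> 'x set \<Rightarrow> 'u \<Rightarrow> 'x set" where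
  "Qu F Q u = {x\<in>Q. F x u \<subseteq> Q}"

definition words :: "'u set \<Rightarrow> nat \<Rightarrow> 'u list set" where
  "words U n = {w. length w = n \<and> set w \<subseteq> U}"

primrec Iset :: "('x \<Rightarrow> 'u \<Rightarrow> 'x set) \<Rightarrow> 'x set \<Rightarrow> 'u list \<Rightarrow> 'x \<Rightarrow> nat \<Rightarrow> 'x set" where
  "Iset F Q w x 0 = {x}"
| "Iset F Q w x (Suc i) =
     (if Suc i < length w then Fimg F (Iset F Q w x i) (w ! i) \<inter> Qu F Q (w ! Suc i)
      else Fimg F (Iset F Q w x i) (w ! i))"

definition adm_point :: "('x \<Rightarrow> 'u \<Rightarrow> 'x set) \<Rightarrow> 'x set \<Rightarrow> nat \<Rightarrow> 'u list set \<Rightarrow> 'x \<Rightarrow> bool" where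
  "adm_point F Q n S x \<longleftrightarrow> x \<in> Q \<and>
     (\<forall>w\<in>S.
        (\<forall>i. i + 1 < n \<longrightarrow>
            Fimg F (Iset F Q w x i) (w ! i)
              \<subseteq> (\<Union>w'\<in>{w'\<in>S. take (Suc i) w' = take (Suc i) w}. Qu F Q (w' ! Suc i))
          \<and> Iset F Q w x (Suc i) \<noteq> {})
        \<and> Iset F Q w x n \<subseteq> Q)"

definition AF :: "('x \<Rightarrow> 'u \<Rightarrow> 'x set) \<Rightarrow> 'u set \<Rightarrow> 'x set \<Rightarrow> nat \<Rightarrow> 'u list set set" where
  "AF F U Q n = {S. S \<subseteq> words U n \<and> S \<noteq> {} \<and>
      (\<forall>w'\<in>S. \<forall>w''\<in>S. w' ! 0 = w'' ! 0) \<and> (\<exists>x. adm_point F Q n S x)}"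

definition QS :: "('x \<Rightarrow> 'u \<Rightarrow> 'x set) \<Rightarrow> 'x set \<Rightarrow> nat \<Rightarrow> 'u list set \<Rightarrow> 'x set" where
  "QS F Q n S = {x. adm_point F Q n S x}"

definition spanning :: "('x \<Rightarrow> 'u \<Rightarrow> 'x set) \<Rightarrow> 'u set \<Rightarrow> 'x set \<Rightarrow> nat \<Rightarrow> 'x set \<Rightarrow> 'u list set \<Rightarrow> bool" where
  "spanning F U Q n K SS \<longleftrightarrow> SS \<subseteq> words U n \<and>
     K \<subseteq> (\<Union>S\<in>{S. S \<subseteq> SS \<and> S \<in> AF F U Q n}. QS F Q n S)"

text \<open>r_inv(n,K,Q) as an extended real (infinite spanning sets have cardinality \<infinity>; Inf {} = \<infinity>).\<close>
definition r_inv :: "('x \<Rightarrow> 'u \<Rightarrow> 'x set) \<Rightarrow> 'u set \<Rightarrow> 'x set \<Rightarrow> nat \<Rightarrow> 'x set \<Rightarrow> ereal" where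
  "r_inv F U Q n K = Inf {ereal (real (card SS)) | SS. finite SS \<and> spanning F U Q n K SS}"

definition elog2 :: "ereal \<Rightarrow> ereal" where
  "elog2 r = (if r = \<infinity> then \<infinity> else if r > 0 then ereal (log 2 (real_of_ereal r)) else -\<infinity>)"

definition h_inv :: "('x \<Rightarrow> 'u \<Rightarrow> 'x set) \<Rightarrow> 'u set \<Rightarrow> 'x set \<Rightarrow> 'x set \<Rightarrow> ereal" where
  "h_inv F U Q K = limsup (\<lambda>n. ereal (1 / real n) * elog2 (r_inv F U Q n K))"

end

theory Submission
  imports Defs
begin


lemma Iset_take:
  assumes "length v = Suc n" "i < n"
  shows "Iset F Q (take n v) x i = Iset F Q v x i"
  using assms(2)
proof (induction i)
  case 0 then show ?case by simp
next
  case (Suc i) then show ?case using assms(1) by (simp add: nth_take)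
qed

lemma Iset_take_last:
  assumes "length v = Suc (Suc j)"
  shows "Iset F Q (take (Suc j) v) x (Suc j) = Fimg F (Iset F Q v x j) (v ! j)"
  using assms Iset_take[of v "Suc j" j F Q x] by (simp add: nth_take)

lemma adm_take:
  assumes S: "S \<subseteq> words U (Suc n)" and adm: "adm_point F Q (Suc n) S x"
  shows "adm_point F Q n (take n ` S) x"
  unfolding adm_point_def
proof (intro conjI ballI allI impI)
  show "x \<in> Q" using adm by (simp add: adm_point_def)
next
  fix w i assume w: "w \<in> take n ` S" and i: "i + 1 < n"
  then obtain v where v: "v \<in> S" "w = take n v" by blast
  have lv: "length v = Suc n" using S v by (auto simp: words_def)
  have A: "Fimg F (Iset F Q v x i) (v ! i)
              \<subseteq> (\<Union>w'\<in>{w'\<in>S. take (Suc i) w' = take (Suc i) v}. Qu F Q (w' ! Suc i))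
          \<and> Iset F Q v x (Suc i) \<noteq> {}"
    using adm v i unfolding adm_point_def by auto
  have e1: "Iset F Q w x i = Iset F Q v x i" using Iset_take[OF lv, where i=i and F=F and Q=Q and x=x] i v by simp
  have e2: "Iset F Q w x (Suc i) = Iset F Q v x (Suc i)" using Iset_take[OF lv, where i="Suc i" and F=F and Q=Q and x=x] i v by simp
  have e3: "w ! i = v ! i" using v i by simp
  have sub: "(\<Union>w'\<in>{w'\<in>S. take (Suc i) w' = take (Suc i) v}. Qu F Q (w' ! Suc i))
     \<subseteq> (\<Union>w'\<in>{w'\<in>take n ` S. take (Suc i) w' = take (Suc i) w}. Qu F Q (w' ! Suc i))"
  proof
    fix y assume "y \<in> (\<Union>w'\<in>{w'\<in>S. take (Suc i) w' = take (Suc i) v}. Qu F Q (w' ! Suc i))"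
    then obtain v' where v': "v' \<in> S" "take (Suc i) v' = take (Suc i) v" "y \<in> Qu F Q (v' ! Suc i)" by blast
    have "take n v' \<in> take n ` S" using v' by blast
    moreover have "take (Suc i) (take n v') = take (Suc i) w" using v' v i by (simp add: min_def)
    moreover have "take n v' ! Suc i = v' ! Suc i" using i by simp
    ultimately show "y \<in> (\<Union>w'\<in>{w'\<in>take n ` S. take (Suc i) w' = take (Suc i) w}. Qu F Q (w' ! Suc i))"
      using v' by force
  qed
  show "Fimg F (Iset F Q w x i) (w ! i)
          \<subseteq> (\<Union>w'\<in>{w'\<in>take n ` S. take (Suc i) w' = take (Suc i) w}. Qu F Q (w' ! Suc i))"
  proof -
    have eqF: "Fimg F (Iset F Q w x i) (w ! i) = Fimg F (Iset F Q v x i) (v ! i)"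
      by (simp only: e1 e3)
    show ?thesis unfolding eqF using conjunct1[OF A] sub by (rule subset_trans)
  qed
  show "Iset F Q w x (Suc i) \<noteq> {}" using A e2 by simp
next
  fix w assume w: "w \<in> take n ` S"
  then obtain v where v: "v \<in> S" "w = take n v" by blast
  have lv: "length v = Suc n" using S v by (auto simp: words_def)
  show "Iset F Q w x n \<subseteq> Q"
  proof (cases n)
    case 0 then show ?thesis using adm by (simp add: adm_point_def)
  next
    case (Suc j)
    have "Fimg F (Iset F Q v x j) (v ! j)
              \<subseteq> (\<Union>w'\<in>{w'\<in>S. take (Suc j) w' = take (Suc j) v}. Qu F Q (w' ! Suc j))"
      using adm v Suc unfolding adm_point_def by auto
    also have "\<dots> \<subseteq> Q" by (auto simp: Qu_def)
    finally show ?thesis using Iset_take_last[of v j F Q x] lv Suc v by simp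
  qed
qed

lemma AF_take:
  assumes "S \<in> AF F U Q (Suc n)" "adm_point F Q (Suc n) S x"
  shows "take n ` S \<in> AF F U Q n \<and> adm_point F Q n (take n ` S) x"
proof -
  have AFS: "S \<subseteq> words U (Suc n) \<and> S \<noteq> {} \<and> (\<forall>w'\<in>S. \<forall>w''\<in>S. w' ! 0 = w'' ! 0)
      \<and> (\<exists>x. adm_point F Q (Suc n) S x)"
    using assms(1) unfolding AF_def by (rule CollectD)
  have S1: "S \<subseteq> words U (Suc n)" using AFS by (rule conjunct1)
  have S2: "S \<noteq> {}" using AFS by blast
  have S3: "\<forall>w'\<in>S. \<forall>w''\<in>S. w' ! 0 = w'' ! 0" using AFS by blast
  have ad: "adm_point F Q n (take n ` S) x" using adm_take[OF S1 assms(2)] .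
  have W: "take n ` S \<subseteq> words U n" using S1 by (auto simp: words_def dest: in_set_takeD)
  have E: "\<forall>w'\<in>take n ` S. \<forall>w''\<in>take n ` S. w' ! 0 = w'' ! 0"
  proof (intro ballI)
    fix a c assume a: "a \<in> take n ` S" and c: "c \<in> take n ` S"
    then obtain a' c' where a': "a' \<in> S" "a = take n a'" and c': "c' \<in> S" "c = take n c'"
      by blast
    show "a ! 0 = c ! 0"
    proof (cases n)
      case 0 then show ?thesis using a' c' by simp
    next
      case (Suc j)
      have "a' ! 0 = c' ! 0" using S3 a'(1) c'(1) by blast
      then show ?thesis using a' c' Suc by simp
    qed
  qed
  have N: "take n ` S \<noteq> {}" using S2 by simp
  have "take n ` S \<in> AF F U Q n"
    unfolding AF_def using W N E ad by blast
  then show ?thesis using ad by blast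
qed

lemma r_inv_mono: "r_inv F U Q n K \<le> r_inv F U Q (Suc n) K"
  unfolding r_inv_def
proof (rule Inf_mono)
  fix b assume "b \<in> {ereal (real (card SS)) |SS. finite SS \<and> spanning F U Q (Suc n) K SS}"
  then obtain SS where SS: "b = ereal (real (card SS))" "finite SS" "spanning F U Q (Suc n) K SS" by blast
  have sp: "spanning F U Q n K (take n ` SS)"
    unfolding spanning_def
  proof (intro conjI subsetI)
    fix w assume "w \<in> take n ` SS"
    then show "w \<in> words U n" using SS(3) by (force simp: spanning_def words_def dest: in_set_takeD)
  next
    fix k assume "k \<in> K"
    then obtain S where S: "S \<subseteq> SS" "S \<in> AF F U Q (Suc n)" "k \<in> QS F Q (Suc n) S"
      using SS(3) by (auto simp: spanning_def)
    have "take n ` S \<in> AF F U Q n \<and> adm_point F Q n (take n ` S) k"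
      using AF_take[OF S(2)] S(3) by (simp add: QS_def)
    then show "k \<in> (\<Union>S\<in>{S. S \<subseteq> take n ` SS \<and> S \<in> AF F U Q n}. QS F Q n S)"
      using S(1) by (auto simp: QS_def intro!: exI[of _ "take n ` S"])
  qed
  have "card (take n ` SS) \<le> card SS" using SS(2) card_image_le by blast
  then show "\<exists>a\<in>{ereal (real (card SS)) |SS. finite SS \<and> spanning F U Q n K SS}. a \<le> b"
    using sp SS by (intro bexI[of _ "ereal (real (card (take n ` SS)))"]) auto
qed

lemma r_inv_ge1:
  assumes "K \<noteq> {}"
  shows "1 \<le> r_inv F U Q n K"
  unfolding r_inv_def
proof (rule Inf_greatest)
  fix b assume "b \<in> {ereal (real (card SS)) |SS. finite SS \<and> spanning F U Q n K SS}"
  then obtain SS where SS: "b = ereal (real (card SS))" "finite SS" "spanning F U Q n K SS" by blast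
  obtain k where "k \<in> K" using assms by blast
  then obtain S where S: "S \<subseteq> SS" "S \<in> AF F U Q n"
    using SS(3) by (auto simp: spanning_def)
  have "SS \<noteq> {}" using S by (auto simp: AF_def)
  then have "card SS \<ge> 1" using SS(2) by (simp add: Suc_le_eq card_gt_0_iff)
  then show "1 \<le> b" using SS(1) by simp
qed



lemma analytic:
  fixes r :: "nat \<Rightarrow> ereal" and m :: nat
  assumes mono: "\<And>n. r n \<le> r (Suc n)" and ge1: "\<And>n. 1 \<le> r n" and m: "m \<ge> 1"
  shows "limsup (\<lambda>n. ereal (1 / real n) * elog2 (r n)) =
         limsup (\<lambda>n. ereal (1 / real (n * m)) * elog2 (r (n * m)))"
proof -
  define f where "f = (\<lambda>n. ereal (1 / real n) * elog2 (r n))"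
  define g where "g = (\<lambda>n. ereal (1 / real (n * m)) * elog2 (r (n * m)))"
  have rmono: "\<And>a c. a \<le> c \<Longrightarrow> r a \<le> r c" using mono by (metis lift_Suc_mono_le)
  have sm: "strict_mono (\<lambda>n. n * m)" using m by (auto simp: strict_mono_def)
  have "g = f \<circ> (\<lambda>n. n * m)" by (auto simp: f_def g_def)
  then have le1: "limsup g \<le> limsup f" using limsup_subseq_mono[OF sm, of f] by simp
  show ?thesis
  proof (cases "\<exists>k0. r k0 = \<infinity>")
    case True
    then obtain k0 where k0: "r k0 = \<infinity>" by blast
    have finf: "f k = \<infinity>" if "k \<ge> Suc k0" for k
    proof -
      have "r k = \<infinity>" using rmono[of k0 k] that k0 by auto
      moreover have "1 / real k > 0" using that by simp
      ultimately show ?thesis by (simp add: f_def elog2_def)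
    qed
    have "\<infinity> \<le> limsup f"
      by (rule le_Limsup) (auto simp: eventually_sequentially intro!: exI[of _ "Suc k0"] finf)
    then have "limsup f = \<infinity>" by (simp add: top_unique)
    have ginf: "g n = \<infinity>" if "n \<ge> Suc k0" for n
    proof -
      have "n * m \<ge> n" using m by simp
      then have "n * m \<ge> Suc k0" using that by linarith
      then have "f (n * m) = \<infinity>" by (rule finf)
      then show ?thesis by (simp add: f_def g_def)
    qed
    have "\<infinity> \<le> limsup g"
      by (rule le_Limsup) (auto simp: eventually_sequentially intro!: exI[of _ "Suc k0"] ginf)
    then have "limsup g = \<infinity>" by (simp add: top_unique)
    with \<open>limsup f = \<infinity>\<close> show ?thesis by (simp add: f_def g_def)
  next
    case False
    then have fin: "\<And>n. r n \<noteq> \<infinity>" by auto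
    define R where "R n = real_of_ereal (r n)" for n
    have rR: "r n = ereal (R n)" for n
      using fin[of n] ge1[of n] unfolding R_def by (cases "r n") auto
    have R1: "R n \<ge> 1" for n using ge1[of n] rR[of n] by simp
    define b where "b n = log 2 (R n)" for n
    have b0: "b n \<ge> 0" for n using R1[of n] by (simp add: b_def)
    have bmono: "b a \<le> b c" if "a \<le> c" for a c
    proof -
      have "R a \<le> R c" using rmono[OF that] rR[of a] rR[of c] by simp
      then show ?thesis using R1[of a] by (simp add: b_def)
    qed
    have fb: "f n = ereal (b n / real n)" for n
      using R1[of n] rR[of n] by (simp add: f_def elog2_def b_def)
    have gb: "g n = ereal (b (n * m) / real (n * m))" for n
      using fb[of "n * m"] by (simp add: f_def g_def)
    have L0: "0 \<le> limsup g"
      by (rule le_Limsup) (auto simp: gb b0)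
    have le2: "limsup f \<le> limsup g"
    proof (rule dense_ge)
      fix z assume Lz: "limsup g < z"
      show "limsup f \<le> z"
      proof (cases "z = \<infinity>")
        case True then show ?thesis by simp
      next
        case False
        have "limsup g \<noteq> \<infinity>" using Lz by auto
        then obtain l where l: "limsup g = ereal l" using L0 by (cases "limsup g") auto
        obtain zr where zr: "z = ereal zr" using False Lz L0 by (cases z) auto
        have lz: "l < zr" "0 \<le> l" using Lz L0 l zr by auto
        define y where "y = (l + zr) / 2"
        have y: "l < y" "y < zr" "0 < zr" using lz by (auto simp: y_def)
        have "eventually (\<lambda>n. g n < ereal y) sequentially"
          by (rule Limsup_lessD) (simp add: l y)
        then obtain N where N: "\<And>n. n \<ge> N \<Longrightarrow> b (n * m) / real (n * m) < y"
          by (auto simp: eventually_sequentially gb)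
        define N' where "N' = max (Suc N) (nat \<lceil>y / (zr - y)\<rceil> + 1)"
        have bound: "f k \<le> z" if k: "k \<ge> N' * m" for k
        proof -
          define n where "n = k div m"
          have mpos: "m > 0" using m by simp
          have nN: "n \<ge> N'"
          proof -
            have "N' * m div m \<le> k div m" using k by (rule div_le_mono)
            then show ?thesis using mpos by (simp add: n_def)
          qed
          have n1: "n \<ge> 1" and nN2: "Suc n \<ge> N" using nN by (auto simp: N'_def)
          have nbig: "real n \<ge> y / (zr - y)"
          proof -
            have "real N' \<ge> real (nat \<lceil>y / (zr - y)\<rceil>)" by (simp add: N'_def)
            moreover have "real (nat \<lceil>y / (zr - y)\<rceil>) \<ge> y / (zr - y)" by linarith
            ultimately show ?thesis using nN by linarith
          qed
          have nm_le: "n * m \<le> k" unfolding n_def by (simp add: div_times_less_eq_dividend)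
          have k_lt: "k < Suc n * m"
          proof -
            have "k = n * m + k mod m" by (simp add: n_def)
            then show ?thesis using mod_less_divisor[OF mpos, of k] by simp
          qed
          have nmpos: "real (n * m) > 0" using n1 mpos by simp
          have kpos: "real k > 0" using nm_le nmpos by linarith
          have b1: "b k \<le> b (Suc n * m)" using bmono k_lt by simp
          have b2: "b (Suc n * m) < y * real (Suc n * m)"
          proof -
            have pos: "real (Suc n * m) > 0" using mpos by (simp only: of_nat_0_less_iff nat_0_less_mult_iff zero_less_Suc simp_thms)
            show ?thesis using N[OF nN2] pos by (simp only: pos_divide_less_eq)
          qed
          have "b k / real k \<le> b k / real (n * m)"
          proof (rule divide_left_mono)
            show "0 \<le> b k" by (rule b0)
            show "real (n * m) \<le> real k" using nm_le by (simp only: of_nat_le_iff)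
            show "0 < real k * real (n * m)" using kpos nmpos by (rule mult_pos_pos)
          qed
          also have "\<dots> \<le> b (Suc n * m) / real (n * m)"
            using b1 nmpos by (simp add: divide_right_mono)
          also have "\<dots> \<le> y * real (Suc n * m) / real (n * m)"
            using b2 nmpos by (simp add: divide_right_mono)
          also have "\<dots> = y + y / real n"
            using n1 mpos by (simp add: field_simps)
          also have "\<dots> \<le> zr"
          proof -
            have "y \<le> real n * (zr - y)" using nbig y
              by (simp add: pos_divide_le_eq)
            then have "y / real n \<le> zr - y" using n1 by (simp add: divide_le_eq mult.commute)
            then show ?thesis by simp
          qed
          finally show ?thesis using fb zr by simp
        qed
        show ?thesis
          by (rule Limsup_bounded) (auto simp: eventually_sequentially intro!: exI[of _ "N' * m"] bound)
      qed
    qed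
    show ?thesis using le1 le2 by (simp add: f_def g_def)
  qed
qed


theorem proposition2p6:
  fixes X :: "'x set" and U :: "'u set" and F :: "'x \<Rightarrow> 'u \<Rightarrow> 'x set"
    and Q K :: "'x set" and m :: nat
  assumes "is_system X U F"
    and "Q \<subseteq> X"
    and "controlled_invariant U F Q"
    and "K \<subseteq> Q" and "K \<noteq> {}"
    and "m \<ge> 1"
  shows "h_inv F U Q K =
    limsup (\<lambda>n. ereal (1 / real (n * m)) * elog2 (r_inv F U Q (n * m) K))"
  unfolding h_inv_def
proof (rule analytic)
    show "\<And>n. r_inv F U Q n K \<le> r_inv F U Q (Suc n) K" by (rule r_inv_mono)
    show "\<And>n. 1 \<le> r_inv F U Q n K" using assms(5) by (rule r_inv_ge1)
    show "1 \<le> m" by (rule assms(6))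
  qed

end
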